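(* Let $\mathcal{G}$ be a subgraph of $G$ satisfying $P_{\mathcal{G}}$, and let $q\in\Delta$ with $G_q=\mathcal{G}$. Then $q\in\Gamma$ if and only if $q\in\Gamma_{\mathcal{G}}$, and in that case $q$ is a stable equilibrium. In other words, $\Gamma_s\cap\{q\in\Delta:G_q=\mathcal{G}\}=\Gamma\cap\{q\in\Delta:G_q=\mathcal{G}\}=\Gamma_{\mathcal{G}}$.
   Context: Let $G=(\mathbb{V},E)$ be a finite graph with adjacency $\sim$ and edge set $E$. Let $a_{ij}=a_{ji}\ge0$ ($>0$ only if $i\sim j$) and $p_{ij}=p_{ji}\in[0,1]$ ($=0$ if $i\not\sim j$), with some $a_{ij}p_{ij}>0$. Fix $h_1\in(0,1]$; $\Delta$ is the set of arrays $x=(x_{ij})$ with $x_{ij}=x_{ji}\ge0$, $x_{ij}=0$ if $i\not\sim j$, $\sum_{i,j}x_{ij}=1$, $\sum_{(i,j):a_{ij}p_{ij}>0}x_{ij}\ge h_1$; $x_i=\sum_jx_{ij}$. $\partial\Delta$: the $x\in\Delta$ for which some vertex $i$ having a neighbour $j$ with $a_{ij}p_{ij}>0$ has $\sum_{j:a_{ij}p_{ij}>0}x_{ij}=0$. $H(x)=\sum_{(i,j):x_{ij}>0}a_{ij}p_{ij}x_{ij}^2/(x_ix_j)$; $y_{ij}=a_{ij}p_{ij}x_{ij}/(x_ix_j)$ ($0$ if $a_{ij}p_{ij}=0$); $F(x)_{ij}=x_{ij}(y_{ij}-H(x))$ ($0$ if $x_{ij}=0$); $\Gamma=\{x\in\Delta:F(x)=0\}$.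 For $x\in\Gamma\cap(\Delta\setminus\partial\Delta)$, $J(x)$ is the Jacobian (indexed by pairs of edges) of $(x_e)_{e\in E}\mapsto(F_e(x))_{e\in E}$, with $x_{ij}=x_{ji}=x_e$ for $e=\{i,j\}$, $x_i=\sum_jx_{ij}$, the formulas for $H$ (terms with $a_{ij}p_{ij}>0$) and $F$ regarded as smooth functions of unconstrained variables near $x$. $x$ is a stable equilibrium iff $x\in\Gamma\cap(\Delta\setminus\partial\Delta)$ and all eigenvalues of $J(x)$ have nonpositive real part; $\Gamma_s$ is the set of stable equilibria. $G_x$: subgraph with vertex set $\mathbb{V}$, $i,j$ adjacent iff $x_{ij}>0$. For a subgraph $\mathcal{G}$ of $G$ (vertex set $\mathbb{V}$), $P_{\mathcal{G}}$ means: (1) all edges $\{i,j\}$ of $\mathcal{G}$ in a same component have the same value $a_{ij}p_{ij}>0$; (2) each component has at most one vertex with several neighbours; (3) a vertex $i$ lies on an edge of $\mathcal{G}$ iff $a_{ij}p_{ij}>0$ for some $j\sim i$. Under $P_{\mathcal{G}}$: the nucleus of a component is its unique vertex with several neighbours (chosen arbitrarily if the component has exactly two vertices; the vertex itself if isolated); $N$ is the set of nuclei; for $i\in N$, $(ap)_i=a_{ik}p_{ik}$ for any $\mathcal{G}$-neighbour $k$ of $i$ ($:=0$ if $i$ is isolated). $\Gamma_{\mathcal{G}}$ is the set of $q\in\Delta$ with $G_q=\mathcal{G}$, $q_i=(ap)_i/(2\sum_{j\in N}(ap)_j)$ for all $i\in N$, and for each $i\in N$ the numbers $q_{ij}$ ($j$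 a $\mathcal{G}$-neighbour of $i$) positive with sum $q_i$. *)

theory Defs
  imports "HOL-Analysis.Analysis"
begin

(* Graph G: vertex set = the finite type 'v, adjacency adj (symmetric, irreflexive).
   Arrays x are functions 'v => 'v => real. *)

definition ap :: "('v \<Rightarrow> 'v \<Rightarrow> real) \<Rightarrow> ('v \<Rightarrow> 'v \<Rightarrow> real) \<Rightarrow> 'v \<Rightarrow> 'v \<Rightarrow> real" where
  "ap a p i j = a i j * p i j"

definition vs :: "('v::finite \<Rightarrow> 'v \<Rightarrow> real) \<Rightarrow> 'v \<Rightarrow> real" where
  "vs x i = (\<Sum>j\<in>UNIV. x i j)"

definition H_fn :: "('v::finite \<Rightarrow> 'v \<Rightarrow> real) \<Rightarrow> ('v \<Rightarrow> 'v \<Rightarrow> real) \<Rightarrow> ('v \<Rightarrow> 'v \<Rightarrow> real) \<Rightarrow> real" where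
  "H_fn a p x = (\<Sum>(i,j)\<in>{(i,j). x i j > 0}. ap a p i j * (x i j)^2 / (vs x i * vs x j))"

definition y_fn :: "('v::finite \<Rightarrow> 'v \<Rightarrow> real) \<Rightarrow> ('v \<Rightarrow> 'v \<Rightarrow> real) \<Rightarrow> ('v \<Rightarrow> 'v \<Rightarrow> real) \<Rightarrow> 'v \<Rightarrow> 'v \<Rightarrow> real" where
  "y_fn a p x i j = (if ap a p i j = 0 then 0 else ap a p i j * x i j / (vs x i * vs x j))"

definition F_fn :: "('v::finite \<Rightarrow> 'v \<Rightarrow> real) \<Rightarrow> ('v \<Rightarrow> 'v \<Rightarrow> real) \<Rightarrow> ('v \<Rightarrow> 'v \<Rightarrow> real) \<Rightarrow> 'v \<Rightarrow> 'v \<Rightarrow> real" where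
  "F_fn a p x i j = (if x i j = 0 then 0 else x i j * (y_fn a p x i j - H_fn a p x))"

definition in_Delta :: "('v::finite \<Rightarrow> 'v \<Rightarrow> bool) \<Rightarrow> ('v \<Rightarrow> 'v \<Rightarrow> real) \<Rightarrow> ('v \<Rightarrow> 'v \<Rightarrow> real) \<Rightarrow> real \<Rightarrow> ('v \<Rightarrow> 'v \<Rightarrow> real) \<Rightarrow> bool" where
  "in_Delta adj a p h1 x \<longleftrightarrow>
     (\<forall>i j. x i j = x j i \<and> x i j \<ge> 0) \<and>
     (\<forall>i j. \<not> adj i j \<longrightarrow> x i j = 0) \<and>
     (\<Sum>(i,j)\<in>UNIV. x i j) = 1 \<and>
     (\<Sum>(i,j)\<in>{(i,j). ap a p i j > 0}. x i j) \<ge> h1"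

definition in_boundary :: "('v::finite \<Rightarrow> 'v \<Rightarrow> bool) \<Rightarrow> ('v \<Rightarrow> 'v \<Rightarrow> real) \<Rightarrow> ('v \<Rightarrow> 'v \<Rightarrow> real) \<Rightarrow> ('v \<Rightarrow> 'v \<Rightarrow> real) \<Rightarrow> bool" where
  "in_boundary adj a p x \<longleftrightarrow>
     (\<exists>i. (\<exists>j. adj i j \<and> ap a p i j > 0) \<and> (\<Sum>j\<in>{j. ap a p i j > 0}. x i j) = 0)"

definition in_Gamma :: "('v::finite \<Rightarrow> 'v \<Rightarrow> bool) \<Rightarrow> ('v \<Rightarrow> 'v \<Rightarrow> real) \<Rightarrow> ('v \<Rightarrow> 'v \<Rightarrow> real) \<Rightarrow> real \<Rightarrow> ('v \<Rightarrow> 'v \<Rightarrow> real) \<Rightarrow> bool" where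
  "in_Gamma adj a p h1 x \<longleftrightarrow> in_Delta adj a p h1 x \<and> (\<forall>i j. F_fn a p x i j = 0)"

definition edges :: "('v \<Rightarrow> 'v \<Rightarrow> bool) \<Rightarrow> 'v set set" where
  "edges adj = {{i, j} | i j. adj i j}"

definition ends :: "'v set \<Rightarrow> 'v \<times> 'v" where
  "ends e = (SOME pr. e = {fst pr, snd pr})"

definition arr :: "('v \<Rightarrow> 'v \<Rightarrow> bool) \<Rightarrow> ('v set \<Rightarrow> real) \<Rightarrow> 'v \<Rightarrow> 'v \<Rightarrow> real" where
  "arr adj u i j = (if adj i j then u {i, j} else 0)"

(* the smooth formulas (H only over terms with a_ij p_ij > 0) in the unconstrained edge variables *)
definition Hs :: "('v::finite \<Rightarrow> 'v \<Rightarrow> bool) \<Rightarrow> ('v \<Rightarrow> 'v \<Rightarrow> real) \<Rightarrow> ('v \<Rightarrow> 'v \<Rightarrow> real) \<Rightarrow> ('v set \<Rightarrow> real) \<Rightarrow> real" where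
  "Hs adj a p u = (\<Sum>(i,j)\<in>{(i,j). ap a p i j > 0}.
      ap a p i j * (arr adj u i j)^2 / (vs (arr adj u) i * vs (arr adj u) j))"

definition ys :: "('v::finite \<Rightarrow> 'v \<Rightarrow> bool) \<Rightarrow> ('v \<Rightarrow> 'v \<Rightarrow> real) \<Rightarrow> ('v \<Rightarrow> 'v \<Rightarrow> real) \<Rightarrow> ('v set \<Rightarrow> real) \<Rightarrow> 'v \<Rightarrow> 'v \<Rightarrow> real" where
  "ys adj a p u i j = (if ap a p i j = 0 then 0
      else ap a p i j * arr adj u i j / (vs (arr adj u) i * vs (arr adj u) j))"

definition Fs :: "('v::finite \<Rightarrow> 'v \<Rightarrow> bool) \<Rightarrow> ('v \<Rightarrow> 'v \<Rightarrow> real) \<Rightarrow> ('v \<Rightarrow> 'v \<Rightarrow> real) \<Rightarrow> ('v set \<Rightarrow> real) \<Rightarrow> 'v \<Rightarrow> 'v \<Rightarrow> real" where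
  "Fs adj a p u i j = arr adj u i j * (ys adj a p u i j - Hs adj a p u)"

definition Fe :: "('v::finite \<Rightarrow> 'v \<Rightarrow> bool) \<Rightarrow> ('v \<Rightarrow> 'v \<Rightarrow> real) \<Rightarrow> ('v \<Rightarrow> 'v \<Rightarrow> real) \<Rightarrow> ('v set \<Rightarrow> real) \<Rightarrow> 'v set \<Rightarrow> real" where
  "Fe adj a p u e = Fs adj a p u (fst (ends e)) (snd (ends e))"

definition coords :: "('v \<Rightarrow> 'v \<Rightarrow> real) \<Rightarrow> 'v set \<Rightarrow> real" where
  "coords x e = x (fst (ends e)) (snd (ends e))"

definition jac :: "('v::finite \<Rightarrow> 'v \<Rightarrow> bool) \<Rightarrow> ('v \<Rightarrow> 'v \<Rightarrow> real) \<Rightarrow> ('v \<Rightarrow> 'v \<Rightarrow> real) \<Rightarrow> ('v \<Rightarrow> 'v \<Rightarrow> real) \<Rightarrow> 'v set \<Rightarrow> 'v set \<Rightarrow> real" where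
  "jac adj a p x e f = deriv (\<lambda>t. Fe adj a p ((coords x)(f := coords x f + t)) e) 0"

definition is_eigenvalue :: "('v \<Rightarrow> 'v \<Rightarrow> bool) \<Rightarrow> ('v set \<Rightarrow> 'v set \<Rightarrow> real) \<Rightarrow> complex \<Rightarrow> bool" where
  "is_eigenvalue adj M lam \<longleftrightarrow>
     (\<exists>v :: 'v set \<Rightarrow> complex. (\<exists>e\<in>edges adj. v e \<noteq> 0) \<and>
        (\<forall>e\<in>edges adj. (\<Sum>f\<in>edges adj. complex_of_real (M e f) * v f) = lam * v e))"

definition stable_eq :: "('v::finite \<Rightarrow> 'v \<Rightarrow> bool) \<Rightarrow> ('v \<Rightarrow> 'v \<Rightarrow> real) \<Rightarrow> ('v \<Rightarrow> 'v \<Rightarrow> real) \<Rightarrow> real \<Rightarrow> ('v \<Rightarrow> 'v \<Rightarrow> real) \<Rightarrow> bool" where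
  "stable_eq adj a p h1 x \<longleftrightarrow> in_Gamma adj a p h1 x \<and> \<not> in_boundary adj a p x \<and>
     (\<forall>lam. is_eigenvalue adj (jac adj a p x) lam \<longrightarrow> Re lam \<le> 0)"

definition is_subgraph :: "('v \<Rightarrow> 'v \<Rightarrow> bool) \<Rightarrow> ('v \<Rightarrow> 'v \<Rightarrow> bool) \<Rightarrow> bool" where
  "is_subgraph adj sg \<longleftrightarrow> (\<forall>i j. sg i j \<longrightarrow> adj i j) \<and> (\<forall>i j. sg i j \<longrightarrow> sg j i)"

definition nbrs :: "('v \<Rightarrow> 'v \<Rightarrow> bool) \<Rightarrow> 'v \<Rightarrow> 'v set" where
  "nbrs sg i = {j. sg i j}"

definition P_prop :: "('v \<Rightarrow> 'v \<Rightarrow> bool) \<Rightarrow> ('v \<Rightarrow> 'v \<Rightarrow> real) \<Rightarrow> ('v \<Rightarrow> 'v \<Rightarrow> real) \<Rightarrow> ('v \<Rightarrow> 'v \<Rightarrow> bool) \<Rightarrow> bool" where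
  "P_prop adj a p sg \<longleftrightarrow>
     (\<forall>i j k l. sg i j \<longrightarrow> sg k l \<longrightarrow> sg\<^sup>*\<^sup>* i k \<longrightarrow> ap a p i j = ap a p k l \<and> ap a p i j > 0) \<and>
     (\<forall>i k. sg\<^sup>*\<^sup>* i k \<longrightarrow> card (nbrs sg i) \<ge> 2 \<longrightarrow> card (nbrs sg k) \<ge> 2 \<longrightarrow> i = k) \<and>
     (\<forall>i. (\<exists>j. sg i j) \<longleftrightarrow> (\<exists>j. adj i j \<and> ap a p i j > 0))"

(* N is a valid choice of nuclei: exactly one per component, and it is the vertex with
   several neighbours if the component has one (otherwise any vertex of the component) *)
definition nucleus_set :: "('v \<Rightarrow> 'v \<Rightarrow> bool) \<Rightarrow> 'v set \<Rightarrow> bool" where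
  "nucleus_set sg N \<longleftrightarrow>
     (\<forall>v. \<exists>!i. i \<in> N \<and> sg\<^sup>*\<^sup>* v i) \<and>
     (\<forall>i\<in>N. card (nbrs sg i) \<ge> 2 \<or> (\<forall>k. sg\<^sup>*\<^sup>* i k \<longrightarrow> card (nbrs sg k) < 2))"

definition apN :: "('v \<Rightarrow> 'v \<Rightarrow> real) \<Rightarrow> ('v \<Rightarrow> 'v \<Rightarrow> real) \<Rightarrow> ('v \<Rightarrow> 'v \<Rightarrow> bool) \<Rightarrow> 'v \<Rightarrow> real" where
  "apN a p sg i = (if \<exists>k. sg i k then ap a p i (SOME k. sg i k) else 0)"

definition in_GammaG :: "('v::finite \<Rightarrow> 'v \<Rightarrow> bool) \<Rightarrow> ('v \<Rightarrow> 'v \<Rightarrow> real) \<Rightarrow> ('v \<Rightarrow> 'v \<Rightarrow> real) \<Rightarrow> real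
     \<Rightarrow> ('v \<Rightarrow> 'v \<Rightarrow> bool) \<Rightarrow> 'v set \<Rightarrow> ('v \<Rightarrow> 'v \<Rightarrow> real) \<Rightarrow> bool" where
  "in_GammaG adj a p h1 sg N q \<longleftrightarrow>
     in_Delta adj a p h1 q \<and> (\<forall>i j. (q i j > 0) = sg i j) \<and>
     (\<forall>i\<in>N. vs q i = apN a p sg i / (2 * (\<Sum>j\<in>N. apN a p sg j))) \<and>
     (\<forall>i\<in>N. (\<forall>j. sg i j \<longrightarrow> q i j > 0) \<and> (\<Sum>j\<in>{j. sg i j}. q i j) = vs q i)"

end

theory Submission
  imports Defs
begin


locale S7 =
  fixes adj :: "'v::finite \<Rightarrow> 'v \<Rightarrow> bool"
    and a p :: "'v \<Rightarrow> 'v \<Rightarrow> real" and h1 :: real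
    and sg :: "'v \<Rightarrow> 'v \<Rightarrow> bool" and N :: "'v set"
    and q :: "'v \<Rightarrow> 'v \<Rightarrow> real"
  assumes adj_sym: "\<And>i j. adj i j \<Longrightarrow> adj j i"
    and adj_irrefl: "\<And>i. \<not> adj i i"
    and a_sym: "\<And>i j. a i j = a j i" and a_nonneg: "\<And>i j. a i j \<ge> 0"
    and a_adj: "\<And>i j. a i j > 0 \<Longrightarrow> adj i j"
    and p_sym: "\<And>i j. p i j = p j i" and p_range: "\<And>i j. 0 \<le> p i j \<and> p i j \<le> 1"
    and p_adj: "\<And>i j. \<not> adj i j \<Longrightarrow> p i j = 0"
    and ap_pos: "\<exists>i j. a i j * p i j > 0"
    and sub: "is_subgraph adj sg"
    and P: "P_prop adj a p sg"
    and nuc: "nucleus_set sg N"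
    and qD: "in_Delta adj a p h1 q"
    and Gq: "\<And>i j. (q i j > 0) \<longleftrightarrow> sg i j"
begin

lemma q_nonneg: "q i j \<ge> 0" using qD unfolding in_Delta_def by blast
lemma q_sym: "q i j = q j i" using qD unfolding in_Delta_def by blast
lemma q_nadj: "\<not> adj i j \<Longrightarrow> q i j = 0" using qD unfolding in_Delta_def by blast
lemma q_sum: "(\<Sum>(i,j)\<in>UNIV. q i j) = 1" using qD unfolding in_Delta_def by blast
lemma sg_sym: "sg i j \<Longrightarrow> sg j i" using sub unfolding is_subgraph_def by blast
lemma sg_adj: "sg i j \<Longrightarrow> adj i j" using sub unfolding is_subgraph_def by blast
lemma sg_irrefl: "\<not> sg i i" using sg_adj adj_irrefl by blast
lemma q_zero: "\<not> sg i j \<Longrightarrow> q i j = 0" using Gq[of i j] q_nonneg[of i j] by linarith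
lemma q_pos: "sg i j \<Longrightarrow> q i j > 0" using Gq by blast
lemma ap_sym: "ap a p i j = ap a p j i" unfolding ap_def using a_sym p_sym by simp
lemma ap_nonneg: "ap a p i j \<ge> 0" unfolding ap_def using a_nonneg p_range by simp
lemma ap_adj: "ap a p i j > 0 \<Longrightarrow> adj i j"
proof -
  assume "ap a p i j > 0"
  hence "a i j \<noteq> 0" unfolding ap_def by auto
  thus ?thesis using a_nonneg[of i j] a_adj by force
qed
lemma P1: "sg i j \<Longrightarrow> sg k l \<Longrightarrow> sg\<^sup>*\<^sup>* i k \<Longrightarrow> ap a p i j = ap a p k l \<and> ap a p i j > 0"
  using P unfolding P_prop_def by blast
lemma P2: "sg\<^sup>*\<^sup>* i k \<Longrightarrow> card (nbrs sg i) \<ge> 2 \<Longrightarrow> card (nbrs sg k) \<ge> 2 \<Longrightarrow> i = k"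
  using P unfolding P_prop_def by blast
lemma P3: "(\<exists>j. sg i j) \<longleftrightarrow> (\<exists>j. adj i j \<and> ap a p i j > 0)"
  using P unfolding P_prop_def by blast
lemma sg_ap: "sg i j \<Longrightarrow> ap a p i j > 0" using P1[of i j i j] by auto
lemma N1: "\<exists>!i. i \<in> N \<and> sg\<^sup>*\<^sup>* v i" using nuc unfolding nucleus_set_def by blast
lemma N2: "i \<in> N \<Longrightarrow> card (nbrs sg i) \<ge> 2 \<or> (\<forall>k. sg\<^sup>*\<^sup>* i k \<longrightarrow> card (nbrs sg k) < 2)"
  using nuc unfolding nucleus_set_def by blast

lemma card2: "x \<in> nbrs sg i \<Longrightarrow> y \<in> nbrs sg i \<Longrightarrow> x \<noteq> y \<Longrightarrow> card (nbrs sg i) \<ge> 2"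
proof -
  assume "x \<in> nbrs sg i" "y \<in> nbrs sg i" "x \<noteq> y"
  hence "{x,y} \<subseteq> nbrs sg i" by auto
  hence "card {x,y} \<le> card (nbrs sg i)" by (rule card_mono[rotated]) simp
  thus ?thesis using \<open>x \<noteq> y\<close> by simp
qed

lemma leaf: assumes "c \<in> N" "sg c l" shows "sg l j \<longleftrightarrow> j = c"
proof -
  have cl: "sg\<^sup>*\<^sup>* c l" using assms(2) by auto
  have lc: "c \<in> nbrs sg l" using sg_sym[OF assms(2)] unfolding nbrs_def by simp
  have "card (nbrs sg l) < 2"
  proof (cases "card (nbrs sg c) \<ge> 2")
    case True
    show ?thesis
    proof (rule ccontr)
      assume "\<not> card (nbrs sg l) < 2"
      hence "c = l" using P2[OF cl True] by simp
      thus False using assms(2) sg_irrefl by simp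
    qed
  next
    case False thus ?thesis using N2[OF assms(1)] cl by auto
  qed
  thus ?thesis using lc card2[of c l] sg_sym[OF assms(2)] unfolding nbrs_def by force
qed

lemma star: assumes "c \<in> N" "sg\<^sup>*\<^sup>* c v" shows "v = c \<or> sg c v"
  using assms(2)
proof (induction rule: rtranclp_induct)
  case base thus ?case by simp
next
  case (step x y)
  show ?case using step.IH
  proof
    assume "x = c" thus ?thesis using step.hyps by simp
  next
    assume "sg c x" thus ?thesis using leaf[OF assms(1)] step.hyps(2) by blast
  qed
qed

lemma rt_sym: "sg\<^sup>*\<^sup>* x y \<Longrightarrow> sg\<^sup>*\<^sup>* y x"
proof -
  have "symp sg" using sg_sym by (auto intro: sympI)
  thus "sg\<^sup>*\<^sup>* x y \<Longrightarrow> sg\<^sup>*\<^sup>* y x" using symp_rtranclp sympD by metis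
qed

lemma edge_N: assumes "sg i j" shows "i \<in> N \<or> j \<in> N"
proof -
  obtain c where c: "c \<in> N" "sg\<^sup>*\<^sup>* i c" using N1[of i] by blast
  have "i = c \<or> sg c i" using star[OF c(1) rt_sym[OF c(2)]] .
  thus ?thesis
  proof
    assume "sg c i" thus ?thesis using leaf[OF c(1) \<open>sg c i\<close>, of j] assms c(1) by simp
  qed (use c in simp)
qed

lemma edge_N2: assumes "sg i j" "i \<in> N" "j \<in> N" shows False
proof -
  have "sg\<^sup>*\<^sup>* i j" using assms(1) by auto
  moreover have "sg\<^sup>*\<^sup>* i i" by simp
  ultimately have "i = j" using N1[of i] assms by blast
  thus False using assms(1) sg_irrefl by simp
qed

end



lemma sum_pairs: "(\<Sum>(i,j)\<in>(UNIV::('v::finite \<times> 'v) set). g i j) = (\<Sum>i\<in>UNIV. \<Sum>j\<in>UNIV. g i j)"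
  by (metis UNIV_Times_UNIV sum.cartesian_product)

context S7 begin

lemma q_cases: "q i j = 0 \<or> sg i j" using q_zero by blast

lemma q_ne: "q i j \<noteq> 0 \<Longrightarrow> sg i j" using q_zero by blast

lemma vs_nonneg: "vs q i \<ge> 0" unfolding vs_def by (simp add: q_nonneg sum_nonneg)

lemma vs_ge: "vs q i \<ge> q i j" unfolding vs_def
  by (rule member_le_sum) (auto simp: q_nonneg)

lemma vs_pos: "sg i j \<Longrightarrow> vs q i > 0" using vs_ge[of i j] q_pos[of i j] by linarith

lemma vs_iso: "\<not> (\<exists>j. sg i j) \<Longrightarrow> vs q i = 0" unfolding vs_def using q_zero by simp

lemma vs_leaf: assumes "c \<in> N" "sg c l" shows "vs q l = q c l"
proof -
  have "vs q l = (\<Sum>j\<in>UNIV. if j = c then q l j else 0)"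
    unfolding vs_def by (rule sum.cong) (auto simp: q_zero leaf[OF assms])
  also have "\<dots> = q l c" by simp
  finally show ?thesis using q_sym by simp
qed

lemma vs_sg: "vs q i = (\<Sum>j\<in>{j. sg i j}. q i j)"
  unfolding vs_def by (rule sum.mono_neutral_right) (auto simp: q_zero)

lemma half: "(\<Sum>i\<in>N. vs q i) = 1/2"
proof -
  have split: "q i j = (if i \<in> N then q i j else 0) + (if j \<in> N then q i j else 0)" for i j
  proof (cases "sg i j")
    case True thus ?thesis using edge_N[OF True] edge_N2[OF True] by auto
  qed (simp add: q_zero)
  have "1 = (\<Sum>i\<in>UNIV. \<Sum>j\<in>UNIV. q i j)" using q_sum sum_pairs[of q] by simp
  also have "\<dots> = (\<Sum>i\<in>UNIV. \<Sum>j\<in>UNIV. (if i \<in> N then q i j else 0)) + (\<Sum>i\<in>UNIV. \<Sum>j\<in>UNIV. (if j \<in> N then q i j else 0))"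
    by (subst split) (simp add: sum.distrib)
  also have "(\<Sum>i\<in>UNIV. \<Sum>j\<in>UNIV. (if j \<in> N then q i j else 0)) = (\<Sum>j\<in>UNIV. \<Sum>i\<in>UNIV. (if j \<in> N then q j i else 0))"
    by (subst sum.swap, intro sum.cong refl) (metis q_sym)
  also have "(\<Sum>i\<in>UNIV. \<Sum>j\<in>UNIV. (if i \<in> N then q i j else 0)) = (\<Sum>i\<in>UNIV. if i \<in> N then vs q i else 0)"
    unfolding vs_def by (rule sum.cong) auto
  also have "(\<Sum>i\<in>UNIV. if i \<in> N then vs q i else 0) = (\<Sum>i\<in>N. vs q i)"
    by (simp add: sum.If_cases)
  finally show ?thesis by simp
qed

lemma apN_edge: assumes "c \<in> N" "sg c l" shows "apN a p sg c = ap a p c l"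
proof -
  have ex: "\<exists>k. sg c k" using assms by blast
  hence "sg c (SOME k. sg c k)" by (rule someI_ex)
  hence "ap a p c (SOME k. sg c k) = ap a p c l" using P1[OF _ assms(2)] by blast
  thus ?thesis unfolding apN_def using ex by simp
qed

lemma apN_iso: "\<not> (\<exists>k. sg c k) \<Longrightarrow> apN a p sg c = 0" unfolding apN_def by auto

lemma apN_nonneg: "apN a p sg c \<ge> 0" unfolding apN_def using ap_nonneg by simp

definition S where "S = (\<Sum>j\<in>N. apN a p sg j)"
definition L where "L = 2 * S"

lemma some_edge: "\<exists>c l. c \<in> N \<and> sg c l"
proof -
  obtain i j where "a i j * p i j > 0" using ap_pos by blast
  hence "ap a p i j > 0" unfolding ap_def .
  hence "\<exists>j'. sg i j'" using P3 ap_adj by blast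
  then obtain j' where "sg i j'" by blast
  thus ?thesis using edge_N[of i j'] sg_sym by blast
qed

lemma S_pos: "S > 0"
proof -
  obtain c l where cl: "c \<in> N" "sg c l" using some_edge by blast
  have "apN a p sg c > 0" using apN_edge[OF cl] sg_ap[OF cl(2)] by simp
  thus ?thesis unfolding S_def using cl(1)
    by (intro sum_pos2[of N c]) (auto simp: apN_nonneg)
qed

lemma L_pos: "L > 0" using S_pos L_def by simp

lemma y_edge: assumes "c \<in> N" "sg c l"
  shows "y_fn a p q c l = apN a p sg c / vs q c" "y_fn a p q l c = apN a p sg c / vs q c"
proof -
  have apc: "ap a p c l > 0" using sg_ap[OF assms(2)] .
  have vl: "vs q l = q c l" using vs_leaf[OF assms] .
  have qp: "q c l > 0" using q_pos[OF assms(2)] .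
  show "y_fn a p q c l = apN a p sg c / vs q c"
    unfolding y_fn_def apN_edge[OF assms] using apc vl qp by simp
  show "y_fn a p q l c = apN a p sg c / vs q c"
    unfolding y_fn_def apN_edge[OF assms] using apc vl qp by (simp add: ap_sym[of l c] q_sym[of l c])
qed

lemma H_eq: "H_fn a p q = (\<Sum>(i,j)\<in>UNIV. y_fn a p q i j * q i j)"
proof -
  have "H_fn a p q = (\<Sum>(i,j)\<in>{(i,j). q i j > 0}. y_fn a p q i j * q i j)"
    unfolding H_fn_def
  proof (rule sum.cong[OF refl])
    fix x assume "x \<in> {(i,j). q i j > 0}"
    then obtain i j where x: "x = (i,j)" "q i j > 0" by auto
    hence "ap a p i j > 0" using Gq sg_ap by blast
    thus "(case x of (i, j) \<Rightarrow> ap a p i j * (q i j)\<^sup>2 / (vs q i * vs q j)) =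
          (case x of (i, j) \<Rightarrow> y_fn a p q i j * q i j)"
      using x unfolding y_fn_def by (simp add: power2_eq_square)
  qed
  also have "\<dots> = (\<Sum>(i,j)\<in>UNIV. y_fn a p q i j * q i j)"
    by (rule sum.mono_neutral_left) (auto intro: q_ne simp: Gq)
  finally show ?thesis .
qed

lemma H_const: assumes "\<And>i j. sg i j \<Longrightarrow> y_fn a p q i j = K" shows "H_fn a p q = K"
proof -
  have "H_fn a p q = (\<Sum>(i,j)\<in>UNIV. K * q i j)"
    unfolding H_eq by (rule sum.cong) (use q_cases assms in \<open>auto split: prod.splits\<close>)
  also have "\<dots> = K * (\<Sum>(i,j)\<in>UNIV. q i j)"
    by (simp add: sum_distrib_left case_prod_unfold)
  finally show ?thesis using q_sum by simp
qed

lemma gamma_facts: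
  assumes "in_Gamma adj a p h1 q \<or> in_GammaG adj a p h1 sg N q"
  shows "(\<forall>i j. sg i j \<longrightarrow> y_fn a p q i j = L) \<and> H_fn a p q = L \<and> (\<forall>c\<in>N. vs q c = apN a p sg c / L)"
  using assms
proof
  assume G: "in_Gamma adj a p h1 q"
  define Hq where "Hq = H_fn a p q"
  have yH: "y_fn a p q i j = Hq" if "sg i j" for i j
  proof -
    have "F_fn a p q i j = 0" using G unfolding in_Gamma_def by blast
    moreover have "q i j \<noteq> 0" using q_pos[OF that] by simp
    ultimately show ?thesis unfolding F_fn_def Hq_def by simp
  qed
  obtain c0 l0 where cl0: "c0 \<in> N" "sg c0 l0" using some_edge by blast
  have Hq_pos: "Hq > 0"
  proof -
    have "Hq = ap a p c0 l0 / vs q c0"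
      using yH[OF cl0(2)] y_edge(1)[OF cl0] apN_edge[OF cl0] by simp
    thus ?thesis using sg_ap[OF cl0(2)] vs_pos[OF cl0(2)] by simp
  qed
  have vsc: "vs q c = apN a p sg c / Hq" if "c \<in> N" for c
  proof (cases "\<exists>l. sg c l")
    case True
    then obtain l where l: "sg c l" by blast
    have "apN a p sg c / vs q c = Hq" using yH[OF l] y_edge(1)[OF that l] by simp
    thus ?thesis using vs_pos[OF l] Hq_pos by (auto simp: field_simps)
  next
    case False thus ?thesis using vs_iso apN_iso by simp
  qed
  have "(\<Sum>c\<in>N. vs q c) = S / Hq" unfolding S_def
    by (simp add: vsc sum_divide_distrib)
  hence "S / Hq = 1/2" using half by simp
  hence HL: "Hq = L" unfolding L_def using Hq_pos by (auto simp: field_simps)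
  show ?thesis using yH vsc HL Hq_def by simp
next
  assume G: "in_GammaG adj a p h1 sg N q"
  have vsc: "\<forall>c\<in>N. vs q c = apN a p sg c / L"
    using G unfolding in_GammaG_def L_def S_def by simp
  have yL: "y_fn a p q i j = L" if "sg i j" for i j
  proof -
    have key: "y_fn a p q c l = L \<and> y_fn a p q l c = L" if "c \<in> N" "sg c l" for c l
    proof -
      have "apN a p sg c > 0" using apN_edge[OF that] sg_ap[OF that(2)] by simp
      thus ?thesis using y_edge[OF that] vsc that(1) L_pos by simp
    qed
    show ?thesis using edge_N[OF that] key that sg_sym by blast
  qed
  show ?thesis using yL H_const[OF yL] vsc by blast
qed

lemma gamma_iff: "in_Gamma adj a p h1 q \<longleftrightarrow> in_GammaG adj a p h1 sg N q"
proof
  assume G: "in_Gamma adj a p h1 q"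
  from gamma_facts G have vsc: "\<forall>c\<in>N. vs q c = apN a p sg c / L" by blast
  show "in_GammaG adj a p h1 sg N q"
    unfolding in_GammaG_def using qD Gq vsc vs_sg unfolding L_def S_def by auto
next
  assume G: "in_GammaG adj a p h1 sg N q"
  from gamma_facts G have yL: "\<forall>i j. sg i j \<longrightarrow> y_fn a p q i j = L" and HL: "H_fn a p q = L" by blast+
  have "F_fn a p q i j = 0" for i j
    using yL HL q_zero[of i j] unfolding F_fn_def by (cases "sg i j") auto
  thus "in_Gamma adj a p h1 q" unfolding in_Gamma_def using qD by blast
qed

lemma not_boundary: "\<not> in_boundary adj a p q"
proof
  assume "in_boundary adj a p q"
  then obtain i where i: "\<exists>j. adj i j \<and> ap a p i j > 0" "(\<Sum>j\<in>{j. ap a p i j > 0}. q i j) = 0"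
    unfolding in_boundary_def by blast
  obtain j where j: "sg i j" using i(1) P3 by blast
  have "q i j \<le> (\<Sum>j\<in>{j. ap a p i j > 0}. q i j)"
    by (rule member_le_sum) (auto simp: q_nonneg sg_ap[OF j])
  thus False using i(2) q_pos[OF j] by simp
qed

end



lemma quot_deriv2:
  fixes w x y A B cA cB :: real
  assumes "A \<noteq> 0" "B \<noteq> 0"
  shows "((\<lambda>t. w * (x + t*y)^2 / ((A + t*cA) * (B + t*cB))) has_field_derivative
          (w * (2*x*y*(A*B) - x^2*(cA*B + A*cB)) / (A*B)^2)) (at 0)"
  apply (rule derivative_eq_intros refl | simp add: assms)+
  using assms by (simp add: field_simps power2_eq_square)

lemma quot_deriv1:
  fixes w x y A B cA cB :: real
  assumes "A \<noteq> 0" "B \<noteq> 0"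
  shows "((\<lambda>t. w * (x + t*y) / ((A + t*cA) * (B + t*cB))) has_field_derivative
          (w * (y*(A*B) - x*(cA*B + A*cB)) / (A*B)^2)) (at 0)"
  apply (rule derivative_eq_intros refl | simp add: assms)+
  using assms by (simp add: field_simps power2_eq_square)




lemma ends_cases: "ends {i,j} = (i,j) \<or> ends {i,j} = (j,i)"
proof -
  have "{i,j} = {fst (ends {i,j}), snd (ends {i,j})}" unfolding ends_def
    by (rule someI[of "\<lambda>pr. {i,j} = {fst pr, snd pr}" "(i,j)"]) simp
  thus ?thesis by (cases "ends {i,j}") (auto simp: doubleton_eq_iff)
qed

context S7 begin

definition chi :: "'v set \<Rightarrow> 'v \<Rightarrow> 'v \<Rightarrow> real" where
  "chi f i j = (if adj i j \<and> {i,j} = f then 1 else 0)"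

lemma coords_q: "coords q {i,j} = q i j"
  unfolding coords_def using ends_cases[of i j] q_sym by auto

lemma arr_upd: "arr adj ((coords q)(f := coords q f + t)) = (\<lambda>i j. q i j + t * chi f i j)"
proof (intro ext)
  fix i j
  show "arr adj ((coords q)(f := coords q f + t)) i j = q i j + t * chi f i j"
    unfolding arr_def chi_def by (cases "adj i j") (auto simp: coords_q q_nadj)
qed

lemma vs_X: "vs (\<lambda>i j. q i j + t * chi f i j) i = vs q i + t * vs (chi f) i"
  unfolding vs_def by (simp add: sum.distrib sum_distrib_left)

lemma e_ends: assumes "e \<in> edges adj"
  shows "adj (fst (ends e)) (snd (ends e))" "e = {fst (ends e), snd (ends e)}"
proof -
  obtain i j where e: "e = {i,j}" "adj i j" using assms unfolding edges_def by blast
  show "adj (fst (ends e)) (snd (ends e))" using ends_cases[of i j] e adj_sym by auto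
  show "e = {fst (ends e), snd (ends e)}" using ends_cases[of i j] e by auto
qed

lemma chi_eq: assumes "f \<in> edges adj" shows "chi f i j = (if i \<in> f \<and> j \<in> f \<and> i \<noteq> j then 1 else 0)"
proof -
  obtain k l where f: "f = {k,l}" "adj k l" using assms unfolding edges_def by blast
  have "k \<noteq> l" using f(2) adj_irrefl by auto
  thus ?thesis unfolding chi_def f(1) using f(2) adj_sym by (auto simp: doubleton_eq_iff)
qed

lemma chi_vs: assumes "f \<in> edges adj" shows "vs (chi f) i = (if i \<in> f then 1 else 0)"
proof (cases "i \<in> f")
  case True
  obtain k l where f: "f = {k,l}" "adj k l" using assms unfolding edges_def by blast
  have kl: "k \<noteq> l" using f(2) adj_irrefl by auto
  obtain o' where o: "f = {i, o'}" "i \<noteq> o'" using True f kl by auto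
  have "vs (chi f) i = (\<Sum>j\<in>UNIV. if j = o' then 1 else 0)"
    unfolding vs_def chi_eq[OF assms] by (rule sum.cong) (use o in auto)
  thus ?thesis using True by simp
next
  case False thus ?thesis unfolding vs_def chi_eq[OF assms] by simp
qed

lemma chi_ends: assumes "e \<in> edges adj" shows "chi f (fst (ends e)) (snd (ends e)) = (if e = f then 1 else 0)"
  unfolding chi_def using e_ends[OF assms] by auto

lemma Qpos_ap: "ap a p i j > 0 \<Longrightarrow> vs q i > 0"
  using P3 ap_adj vs_pos by blast

lemma Fe_upd:
  shows "Fe adj a p ((coords q)(f := coords q f + t)) e =
    (q (fst (ends e)) (snd (ends e)) + t * chi f (fst (ends e)) (snd (ends e))) *
    ((if ap a p (fst (ends e)) (snd (ends e)) = 0 then 0 else ap a p (fst (ends e)) (snd (ends e)) * (q (fst (ends e)) (snd (ends e)) + t * chi f (fst (ends e)) (snd (ends e))) /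
        ((vs q (fst (ends e)) + t * vs (chi f) (fst (ends e))) * (vs q (snd (ends e)) + t * vs (chi f) (snd (ends e)))))
     - (\<Sum>(i,j)\<in>{(i,j). ap a p i j > 0}. ap a p i j * (q i j + t * chi f i j)^2 /
        ((vs q i + t * vs (chi f) i) * (vs q j + t * vs (chi f) j))))"
  unfolding Fe_def Fs_def ys_def Hs_def arr_upd vs_X by simp

end



context S7 begin

definition HD :: "'v set \<Rightarrow> real" where
  "HD f = (\<Sum>(i,j)\<in>{(i,j). ap a p i j > 0}. ap a p i j *
     (2 * q i j * chi f i j * (vs q i * vs q j) - (q i j)^2 * (vs (chi f) i * vs q j + vs q i * vs (chi f) j))
     / (vs q i * vs q j)^2)"

definition YD :: "'v set \<Rightarrow> 'v \<Rightarrow> 'v \<Rightarrow> real" where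
  "YD f i0 j0 = (if ap a p i0 j0 = 0 then 0 else ap a p i0 j0 *
     (chi f i0 j0 * (vs q i0 * vs q j0) - q i0 j0 * (vs (chi f) i0 * vs q j0 + vs q i0 * vs (chi f) j0))
     / (vs q i0 * vs q j0)^2)"

lemma HS_deriv:
  "((\<lambda>t. \<Sum>(i,j)\<in>{(i,j). ap a p i j > 0}. ap a p i j * (q i j + t * chi f i j)^2 /
        ((vs q i + t * vs (chi f) i) * (vs q j + t * vs (chi f) j))) has_field_derivative HD f) (at 0)"
  unfolding HD_def
proof (rule DERIV_sum)
  fix x assume "x \<in> {(i,j). ap a p i j > 0}"
  then obtain i j where x: "x = (i,j)" "ap a p i j > 0" by auto
  have "vs q i \<noteq> 0" using Qpos_ap[OF x(2)] by simp
  moreover have "vs q j \<noteq> 0" using Qpos_ap[of j i] x(2) ap_sym by simp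
  ultimately show "((\<lambda>t. case x of (i,j) \<Rightarrow> ap a p i j * (q i j + t * chi f i j)^2 /
        ((vs q i + t * vs (chi f) i) * (vs q j + t * vs (chi f) j))) has_field_derivative
     (case x of (i,j) \<Rightarrow> ap a p i j *
     (2 * q i j * chi f i j * (vs q i * vs q j) - (q i j)^2 * (vs (chi f) i * vs q j + vs q i * vs (chi f) j))
     / (vs q i * vs q j)^2)) (at 0)"
    unfolding x(1) using quot_deriv2 by simp
qed

lemma YS_deriv:
  assumes "adj i0 j0"
  shows "((\<lambda>t. if ap a p i0 j0 = 0 then 0 else ap a p i0 j0 * (q i0 j0 + t * chi f i0 j0) /
        ((vs q i0 + t * vs (chi f) i0) * (vs q j0 + t * vs (chi f) j0))) has_field_derivative YD f i0 j0) (at 0)"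
proof (cases "ap a p i0 j0 = 0")
  case True thus ?thesis unfolding YD_def by simp
next
  case False
  hence pos: "ap a p i0 j0 > 0" using ap_nonneg[of i0 j0] by simp
  have "vs q i0 \<noteq> 0" using Qpos_ap[OF pos] by simp
  moreover have "vs q j0 \<noteq> 0" using Qpos_ap[of j0 i0] pos ap_sym by simp
  ultimately show ?thesis unfolding YD_def using False quot_deriv1 by simp
qed

lemma HS0: "(\<Sum>(i,j)\<in>{(i,j). ap a p i j > 0}. ap a p i j * (q i j + 0 * chi f i j)^2 /
        ((vs q i + 0 * vs (chi f) i) * (vs q j + 0 * vs (chi f) j))) = H_fn a p q"
  unfolding H_fn_def
  apply simp
  apply (rule sum.mono_neutral_right)
  by (auto simp: Gq sg_ap dest: q_ne)

lemma jac_formula: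
  assumes e: "e \<in> edges adj"
  shows "jac adj a p q e f = chi f (fst (ends e)) (snd (ends e)) * (y_fn a p q (fst (ends e)) (snd (ends e)) - H_fn a p q) + q (fst (ends e)) (snd (ends e)) * (YD f (fst (ends e)) (snd (ends e)) - HD f)"
proof -
  define i0 where "i0 = fst (ends e)"
  define j0 where "j0 = snd (ends e)"
  have adj0: "adj i0 j0" using e_ends[OF e] i0_def j0_def by simp
  have A: "((\<lambda>t. q i0 j0 + t * chi f i0 j0) has_field_derivative chi f i0 j0) (at 0)"
    by (rule derivative_eq_intros refl | simp)+
  note B = DERIV_diff[OF YS_deriv[OF adj0, of f] HS_deriv[of f]]
  have D: "((\<lambda>t. Fe adj a p ((coords q)(f := coords q f + t)) e) has_field_derivative
     chi f i0 j0 * (y_fn a p q i0 j0 - H_fn a p q) + q i0 j0 * (YD f i0 j0 - HD f)) (at 0)"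
    unfolding Fe_upd i0_def[symmetric] j0_def[symmetric]
    apply (rule DERIV_cong[OF DERIV_mult[OF A B]])
    using HS0[of f] unfolding y_fn_def by (simp add: algebra_simps)
  show ?thesis unfolding jac_def using DERIV_imp_deriv[OF D] i0_def j0_def by simp
qed

end



locale S7G = S7 +
  assumes G: "in_Gamma adj a p h1 q"
begin

lemma yL: "sg i j \<Longrightarrow> y_fn a p q i j = L" using gamma_facts G by blast
lemma HL: "H_fn a p q = L" using gamma_facts G by blast

lemma jac_nonsg:
  assumes e: "e \<in> edges adj" and z: "q (fst (ends e)) (snd (ends e)) = 0"
  shows "jac adj a p q e f = - L * (if e = f then 1 else 0)"
  unfolding jac_formula[OF e] chi_ends[OF e] HL z y_fn_def by simp

lemma sum_ind2: assumes "f \<in> edges adj" shows "(\<Sum>i\<in>UNIV. vs (chi f) i) = 2"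
proof -
  obtain k l where f: "f = {k,l}" "adj k l" using assms unfolding edges_def by blast
  have kl: "k \<noteq> l" using f(2) adj_irrefl by auto
  have "(\<Sum>i\<in>UNIV. vs (chi f) i) = (\<Sum>i\<in>UNIV. if i \<in> f then 1 else 0)"
    using chi_vs[OF assms] by simp
  also have "\<dots> = (\<Sum>i\<in>f. 1)" by (simp add: sum.If_cases)
  also have "\<dots> = 2" using f(1) kl by simp
  finally show ?thesis .
qed

lemma HD_zero:
  assumes f: "f \<in> edges adj" and pos: "q (fst (ends f)) (snd (ends f)) > 0"
  shows "HD f = 0"
proof -
  define k where "k = fst (ends f)"
  define l where "l = snd (ends f)"
  have fkl: "f = {k,l}" using e_ends[OF f] k_def l_def by simp
  have skl: "sg k l" using pos Gq k_def l_def by simp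
  let ?c = "vs (chi f)" and ?Q = "vs q"
  have cQ: "?c i / ?Q i * ?Q i = ?c i" for i
  proof (cases "i \<in> f")
    case True
    hence "?Q i > 0" using fkl vs_pos skl sg_sym by auto
    thus ?thesis by simp
  next
    case False thus ?thesis using chi_vs[OF f] by simp
  qed
  have inner: "(\<Sum>j\<in>UNIV. q i j * ?c i / ?Q i) = ?c i" for i
  proof (cases "i \<in> f")
    case True
    hence Q: "?Q i > 0" using fkl vs_pos skl sg_sym by auto
    have "(\<Sum>j\<in>UNIV. q i j * ?c i / ?Q i) = (\<Sum>j\<in>UNIV. q i j) * ?c i / ?Q i"
      by (simp add: sum_divide_distrib sum_distrib_right)
    also have "\<dots> = ?c i" using Q unfolding vs_def[of q] by simp
    finally show ?thesis .
  next
    case False thus ?thesis using chi_vs[OF f] by simp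
  qed
  have inner2: "(\<Sum>i\<in>UNIV. q i j * ?c j / ?Q j) = ?c j" for j
    using inner[of j] q_sym by (metis (no_types, lifting) sum.cong)
  have chi_sg: "chi f i j \<noteq> 0 \<Longrightarrow> sg i j" for i j
    using fkl skl sg_sym unfolding chi_def by (auto simp: doubleton_eq_iff split: if_splits)
  have trm: "ap a p i j *
     (2 * q i j * chi f i j * (?Q i * ?Q j) - (q i j)^2 * (?c i * ?Q j + ?Q i * ?c j)) / (?Q i * ?Q j)^2
     = L * (2 * chi f i j - q i j * ?c i / ?Q i - q i j * ?c j / ?Q j)" for i j
  proof (cases "sg i j")
    case False
    hence "q i j = 0" "chi f i j = 0" using q_zero chi_sg by blast+
    thus ?thesis by simp
  next
    case True
    have Qi: "?Q i > 0" using vs_pos[OF True] .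
    have Qj: "?Q j > 0" using vs_pos[OF sg_sym[OF True]] .
    have qp: "q i j > 0" using q_pos[OF True] .
    have "ap a p i j * q i j / (?Q i * ?Q j) = L"
      using yL[OF True] sg_ap[OF True] unfolding y_fn_def by simp
    hence apv: "ap a p i j = L * (?Q i * ?Q j) / q i j" using Qi Qj qp by (simp add: field_simps)
    show ?thesis unfolding apv using Qi Qj qp by (simp add: field_simps power2_eq_square)
  qed
  have "HD f = (\<Sum>(i,j)\<in>{(i,j). ap a p i j > 0}. L * (2 * chi f i j - q i j * ?c i / ?Q i - q i j * ?c j / ?Q j))"
    unfolding HD_def by (rule sum.cong) (auto simp: trm)
  also have "\<dots> = (\<Sum>(i,j)\<in>UNIV. L * (2 * chi f i j - q i j * ?c i / ?Q i - q i j * ?c j / ?Q j))"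
  proof (rule sum.mono_neutral_left)
    show "\<forall>x\<in>UNIV - {(i,j). ap a p i j > 0}.
      (case x of (i,j) \<Rightarrow> L * (2 * chi f i j - q i j * ?c i / ?Q i - q i j * ?c j / ?Q j)) = 0"
    proof
      fix x assume "x \<in> UNIV - {(i,j). ap a p i j > 0}"
      then obtain i j where x: "x = (i,j)" "\<not> sg i j" using sg_ap by auto
      thus "(case x of (i,j) \<Rightarrow> L * (2 * chi f i j - q i j * ?c i / ?Q i - q i j * ?c j / ?Q j)) = 0"
        using q_zero chi_sg by auto
    qed
  qed auto
  also have "\<dots> = L * (2 * (\<Sum>i\<in>UNIV. \<Sum>j\<in>UNIV. chi f i j) - (\<Sum>i\<in>UNIV. \<Sum>j\<in>UNIV. q i j * ?c i / ?Q i)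
       - (\<Sum>i\<in>UNIV. \<Sum>j\<in>UNIV. q i j * ?c j / ?Q j))"
    unfolding sum_pairs by (simp add: sum_distrib_left sum_subtractf right_diff_distrib)
  also have "(\<Sum>i\<in>UNIV. \<Sum>j\<in>UNIV. chi f i j) = 2" using sum_ind2[OF f] unfolding vs_def .
  also have "(\<Sum>i\<in>UNIV. \<Sum>j\<in>UNIV. q i j * ?c i / ?Q i) = 2"
    unfolding inner using sum_ind2[OF f] .
  also have "(\<Sum>i\<in>UNIV. \<Sum>j\<in>UNIV. q i j * ?c j / ?Q j) = 2"
    by (subst sum.swap) (unfold inner2, rule sum_ind2[OF f])
  finally show ?thesis by simp
qed

end



context S7G begin

lemma sg_edge_struct:
  assumes e: "e \<in> edges adj" and pos: "coords q e > 0"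
  shows "\<exists>c l. c \<in> N \<and> sg c l \<and> e = {c,l}"
proof -
  have s: "sg (fst (ends e)) (snd (ends e))" using pos Gq unfolding coords_def by simp
  have ee: "e = {fst (ends e), snd (ends e)}" using e_ends[OF e] by simp
  show ?thesis using edge_N[OF s] s sg_sym ee by (metis insert_commute)
qed

lemma leaf_in: assumes f: "f \<in> edges adj" "coords q f > 0" and cl: "c \<in> N" "sg c l" and lf: "l \<in> f"
  shows "f = {c,l}"
proof -
  obtain c' l' where f': "c' \<in> N" "sg c' l'" "f = {c',l'}" using sg_edge_struct[OF f] by blast
  have "l \<noteq> c'" using edge_N2[OF cl(2) cl(1)] f'(1) by blast
  hence "l = l'" using lf f'(3) by auto
  hence "sg l c'" using f'(2) sg_sym by simp
  hence "c' = c" using leaf[OF cl] by simp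
  thus ?thesis using f'(3) \<open>l = l'\<close> by simp
qed

lemma jac_sg:
  assumes e: "e \<in> edges adj" and f: "f \<in> edges adj" and pe: "coords q e > 0" and pf: "coords q f > 0"
  shows "jac adj a p q e f = - L * coords q e * (\<Sum>x\<in>N. if x \<in> e \<and> x \<in> f then 1 / vs q x else 0)"
proof -
  define i0 where "i0 = fst (ends e)"
  define j0 where "j0 = snd (ends e)"
  define q0 where "q0 = coords q e"
  have q0: "q0 = q i0 j0" unfolding q0_def coords_def i0_def j0_def ..
  have s: "sg i0 j0" using pe Gq q0 q0_def by simp
  have ee: "e = {i0, j0}" using e_ends[OF e] i0_def j0_def by simp
  let ?c = "vs (chi f)" and ?Q = "vs q"
  have Qi: "?Q i0 > 0" using vs_pos[OF s] .
  have Qj: "?Q j0 > 0" using vs_pos[OF sg_sym[OF s]] .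
  have qp: "q0 > 0" using pe q0_def by simp
  have apne: "ap a p i0 j0 \<noteq> 0" using sg_ap[OF s] by simp
  have "ap a p i0 j0 * q i0 j0 / (?Q i0 * ?Q j0) = L"
    using yL[OF s] apne unfolding y_fn_def by simp
  hence apv: "ap a p i0 j0 = L * (?Q i0 * ?Q j0) / q0" using Qi Qj qp q0 by (simp add: field_simps)
  have step1: "jac adj a p q e f = L * (chi f i0 j0 - q0 * ?c i0 / ?Q i0 - q0 * ?c j0 / ?Q j0)"
    unfolding jac_formula[OF e] i0_def[symmetric] j0_def[symmetric] q0[symmetric]
      yL[OF s] HL HD_zero[OF f pf[unfolded coords_def]] YD_def
    using apne qp Qi Qj unfolding apv by (simp add: field_simps power2_eq_square)
  obtain c l where cl: "c \<in> N" "sg c l" "e = {c,l}" using sg_edge_struct[OF e pe] by blast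
  have Ql: "?Q l = q0" using vs_leaf[OF cl(1,2)] q0 ee cl(3) q_sym by (auto simp: doubleton_eq_iff)
  have step2: "q0 * ?c i0 / ?Q i0 + q0 * ?c j0 / ?Q j0 = q0 * ?c c / ?Q c + q0 * ?c l / ?Q l"
    using ee cl(3) by (auto simp: doubleton_eq_iff)
  have lf: "l \<in> f \<longleftrightarrow> e = f" using leaf_in[OF f pf cl(1,2)] cl(3) by auto
  have step3: "q0 * ?c l / ?Q l = chi f i0 j0"
    unfolding chi_vs[OF f] Ql i0_def j0_def chi_ends[OF e] using qp lf by simp
  have lN: "l \<notin> N" using edge_N2[OF cl(2) cl(1)] by blast
  have step4: "(\<Sum>x\<in>N. if x \<in> e \<and> x \<in> f then 1 / ?Q x else 0) = (if c \<in> f then 1 / ?Q c else 0)"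
  proof -
    have "(\<Sum>x\<in>N. if x \<in> e \<and> x \<in> f then 1 / ?Q x else 0) = (\<Sum>x\<in>N. if x = c then (if c \<in> f then 1 / ?Q c else 0) else 0)"
      by (rule sum.cong) (use cl(3) lN in auto)
    also have "\<dots> = (if c \<in> f then 1 / ?Q c else 0)" using cl(1) by simp
    finally show ?thesis .
  qed
  show ?thesis
    unfolding step1 step4 q0_def[symmetric] chi_vs[OF f]
    using step2 step3 unfolding chi_vs[OF f] by (auto simp: field_simps)
qed

end



context S7G begin

lemma cof_if: "complex_of_real (if P then 1 else 0) = (if P then 1 else 0)" by simp

lemma cns: "(complex_of_real (cmod z))^2 = z * cnj z"
  by (metis complex_norm_square of_real_power)

lemma finite_E: "finite (edges adj)" by (rule finite_subset[OF subset_UNIV]) simp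

lemma coords_nonneg: "coords q e \<ge> 0" unfolding coords_def by (rule q_nonneg)

lemma eig_re:
  assumes "is_eigenvalue adj (jac adj a p q) lam"
  shows "Re lam \<le> 0"
proof -
  let ?E = "edges adj"
  obtain v where v0: "\<exists>e\<in>?E. v e \<noteq> 0"
    and ev: "\<And>e. e \<in> ?E \<Longrightarrow> (\<Sum>f\<in>?E. complex_of_real (jac adj a p q e f) * v f) = lam * v e"
    using assms unfolding is_eigenvalue_def by blast
  show ?thesis
  proof (cases "lam = - of_real L")
    case True thus ?thesis using L_pos by simp
  next
    case False
    define Sp where "Sp = {e\<in>?E. coords q e > 0}"
    have finSp: "finite Sp" unfolding Sp_def using finite_E by simp
    have vz: "v e = 0" if e: "e \<in> ?E" "e \<notin> Sp" for e
    proof -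
      have z: "q (fst (ends e)) (snd (ends e)) = 0"
        using e coords_nonneg[of e] unfolding Sp_def coords_def by auto
      have "(\<Sum>f\<in>?E. complex_of_real (jac adj a p q e f) * v f) = (\<Sum>f\<in>?E. if f = e then - of_real L * v e else 0)"
        by (rule sum.cong) (auto simp: jac_nonsg[OF e(1) z])
      also have "\<dots> = - of_real L * v e" using e(1) by simp
      finally have "lam * v e = - of_real L * v e" using ev[OF e(1)] by simp
      hence "(lam + of_real L) * v e = 0" by (simp add: algebra_simps)
      moreover have "lam + of_real L \<noteq> 0" using False by (simp add: eq_neg_iff_add_eq_0[symmetric])
      ultimately show ?thesis by simp
    qed
    define s where "s x = (\<Sum>f\<in>Sp. if x \<in> f then v f else 0)" for x
    define w where "w e x = (if x \<in> e then 1 / vs q x else 0)" for e x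
    have key: "lam * v e = complex_of_real (- L * coords q e) * (\<Sum>x\<in>N. complex_of_real (w e x) * s x)"
      if e: "e \<in> Sp" for e
    proof -
      have eE: "e \<in> ?E" and pe: "coords q e > 0" using e unfolding Sp_def by auto
      have "lam * v e = (\<Sum>f\<in>?E. complex_of_real (jac adj a p q e f) * v f)" using ev[OF eE] by simp
      also have "\<dots> = (\<Sum>f\<in>Sp. complex_of_real (jac adj a p q e f) * v f)"
        by (rule sum.mono_neutral_right) (use finite_E vz in \<open>auto simp: Sp_def\<close>)
      also have "\<dots> = (\<Sum>f\<in>Sp. complex_of_real (- L * coords q e) *
           (\<Sum>x\<in>N. complex_of_real (w e x) * (if x \<in> f then v f else 0)))"
      proof (rule sum.cong[OF refl])
        fix f assume f: "f \<in> Sp"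
        hence fE: "f \<in> ?E" and pf: "coords q f > 0" unfolding Sp_def by auto
        have "(\<Sum>x\<in>N. if x \<in> e \<and> x \<in> f then 1 / vs q x else 0) = (\<Sum>x\<in>N. w e x * (if x \<in> f then 1 else 0))"
          unfolding w_def by (rule sum.cong) auto
        hence J: "complex_of_real (jac adj a p q e f) = complex_of_real (- L * coords q e) *
            (\<Sum>x\<in>N. complex_of_real (w e x) * (if x \<in> f then 1 else 0))"
          unfolding jac_sg[OF eE fE pe pf] by (simp add: of_real_sum cof_if)
        show "complex_of_real (jac adj a p q e f) * v f = complex_of_real (- L * coords q e) *
           (\<Sum>x\<in>N. complex_of_real (w e x) * (if x \<in> f then v f else 0))"
          unfolding J mult.assoc[of "complex_of_real (- L * coords q e)"] sum_distrib_right sum_distrib_left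
          by (rule sum.cong) auto
      qed
      also have "\<dots> = complex_of_real (- L * coords q e) * (\<Sum>f\<in>Sp. \<Sum>x\<in>N. complex_of_real (w e x) * (if x \<in> f then v f else 0))"
        by (simp only: sum_distrib_left)
      also have "\<dots> = complex_of_real (- L * coords q e) * (\<Sum>x\<in>N. \<Sum>f\<in>Sp. complex_of_real (w e x) * (if x \<in> f then v f else 0))"
        by (subst sum.swap) (rule refl)
      also have "\<dots> = complex_of_real (- L * coords q e) * (\<Sum>x\<in>N. complex_of_real (w e x) * s x)"
        unfolding s_def by (simp only: sum_distrib_left)
      finally show ?thesis .
    qed
    define A where "A = (\<Sum>e\<in>Sp. (cmod (v e))^2 / coords q e)"
    define B where "B = (\<Sum>x\<in>N. (cmod (s x))^2 / vs q x)"
    have "lam * complex_of_real A = (\<Sum>e\<in>Sp. cnj (v e) * (lam * v e) / complex_of_real (coords q e))"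
      unfolding A_def of_real_sum sum_distrib_left
      by (rule sum.cong[OF refl]) (simp add: cns mult.commute mult.left_commute)
    also have "\<dots> = (\<Sum>e\<in>Sp. complex_of_real (- L) * (\<Sum>x\<in>N. complex_of_real (w e x) * s x * cnj (v e)))"
    proof (rule sum.cong[OF refl])
      fix e assume e: "e \<in> Sp"
      hence pe: "coords q e > 0" unfolding Sp_def by auto
      show "cnj (v e) * (lam * v e) / complex_of_real (coords q e) =
            complex_of_real (- L) * (\<Sum>x\<in>N. complex_of_real (w e x) * s x * cnj (v e))"
        unfolding key[OF e] using pe
        by (simp add: sum_distrib_right sum_distrib_left field_simps sum_negf)
    qed
    also have "\<dots> = complex_of_real (- L) * (\<Sum>e\<in>Sp. \<Sum>x\<in>N. s x * (complex_of_real (w e x) * cnj (v e)))"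
      by (simp only: sum_distrib_left mult.commute mult.left_commute)
    also have "\<dots> = complex_of_real (- L) * (\<Sum>x\<in>N. \<Sum>e\<in>Sp. s x * (complex_of_real (w e x) * cnj (v e)))"
      by (subst sum.swap) (rule refl)
    also have "\<dots> = complex_of_real (- L) * (\<Sum>x\<in>N. s x * (\<Sum>e\<in>Sp. complex_of_real (w e x) * cnj (v e)))"
      by (simp only: sum_distrib_left)
    also have "\<dots> = complex_of_real (- L) * (\<Sum>x\<in>N. s x * (complex_of_real (1 / vs q x) * cnj (s x)))"
    proof -
      have "(\<Sum>e\<in>Sp. complex_of_real (w e x) * cnj (v e)) = complex_of_real (1 / vs q x) * cnj (s x)" for x
        unfolding s_def w_def cnj_sum sum_distrib_left by (rule sum.cong) auto
      thus ?thesis by simp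
    qed
    also have "\<dots> = complex_of_real (- L * B)"
      unfolding B_def of_real_mult of_real_sum
      by (simp add: cns sum_distrib_left mult.commute mult.left_commute divide_inverse)
    finally have eq: "lam * complex_of_real A = complex_of_real (- L * B)" .
    have ReEq: "Re lam * A = - L * B" using arg_cong[where f=Re, OF eq] by simp
    have B0: "B \<ge> 0" unfolding B_def by (intro sum_nonneg divide_nonneg_nonneg vs_nonneg) auto
    obtain e0 where e0: "e0 \<in> ?E" "v e0 \<noteq> 0" using v0 by blast
    have e0S: "e0 \<in> Sp" using vz e0 by blast
    have A0: "A > 0" unfolding A_def
    proof (rule sum_pos2[OF finSp e0S])
      show "0 < (cmod (v e0))^2 / coords q e0" using e0 e0S unfolding Sp_def by auto
      show "\<And>i. i \<in> Sp \<Longrightarrow> 0 \<le> (cmod (v i))^2 / coords q i" using coords_nonneg by simp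
    qed
    have "Re lam * A \<le> 0" using ReEq B0 L_pos by (simp add: mult_nonneg_nonneg)
    thus ?thesis using A0 by (simp add: mult_le_0_iff)
  qed
qed

end


theorem proposition7:
  fixes adj :: "'v::finite \<Rightarrow> 'v \<Rightarrow> bool"
    and a p :: "'v \<Rightarrow> 'v \<Rightarrow> real" and h1 :: real
    and sg :: "'v \<Rightarrow> 'v \<Rightarrow> bool" and N :: "'v set"
    and q :: "'v \<Rightarrow> 'v \<Rightarrow> real"
  assumes adj_sym: "\<And>i j. adj i j \<Longrightarrow> adj j i"
    and adj_irrefl: "\<And>i. \<not> adj i i"
    and a_sym: "\<And>i j. a i j = a j i" and a_nonneg: "\<And>i j. a i j \<ge> 0"
    and a_adj: "\<And>i j. a i j > 0 \<Longrightarrow> adj i j"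
    and p_sym: "\<And>i j. p i j = p j i" and p_range: "\<And>i j. 0 \<le> p i j \<and> p i j \<le> 1"
    and p_adj: "\<And>i j. \<not> adj i j \<Longrightarrow> p i j = 0"
    and ap_pos: "\<exists>i j. a i j * p i j > 0"
    and h1: "0 < h1" "h1 \<le> 1"
    and sub: "is_subgraph adj sg"
    and P: "P_prop adj a p sg"
    and nuc: "nucleus_set sg N"
    and qD: "in_Delta adj a p h1 q"
    and Gq: "\<And>i j. (q i j > 0) \<longleftrightarrow> sg i j"
  shows "(in_Gamma adj a p h1 q \<longleftrightarrow> in_GammaG adj a p h1 sg N q) \<and>
         (in_Gamma adj a p h1 q \<longrightarrow> stable_eq adj a p h1 q)"
proof -
  interpret S7 adj a p h1 sg N q
    by unfold_locales (fact adj_sym adj_irrefl a_sym a_nonneg a_adj p_sym p_range p_adj ap_pos sub P nuc qD Gq)+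
  have "in_Gamma adj a p h1 q \<longrightarrow> stable_eq adj a p h1 q"
  proof
    assume G: "in_Gamma adj a p h1 q"
    interpret S7G adj a p h1 sg N q by unfold_locales (fact G)
    show "stable_eq adj a p h1 q" unfolding stable_eq_def using G not_boundary eig_re by blast
  qed
  thus ?thesis using gamma_iff by blast
qed

end
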